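(* Let $n\in\mathbb N$, $B\in\mathcal S_n(\mathcal H)$, $w\in\mathbb C\setminus\mathbb R$, and let $V:=b_w(B)Q_w$ (a partial isometry on $\mathcal H$). Let $U$ on $\mathcal K\supseteq\mathcal H$ be the minimal unitary dilation of $V$, and let $P_*$ be the orthogonal projection onto $\mathcal K\ominus\overline{\mathrm{span}}\{U^kx:k\in\mathbb Z,\ x\in\ker(B^*-w)\}$. Then for every $h\in\mathcal H$, $$(1-P_* )h=\sum_{j=0}^\infty U^{-j}P_wV^jh .$$
   Context: For a separable Hilbert space $\mathcal H$ and $n\in\mathbb N$, $\mathcal S_n(\mathcal H)$ is the set of linear transformations $B$ with domain $\mathrm{dom}(B)\subseteq\mathcal H$ (not necessarily dense) that are symmetric, closed, simple ($\bigcap_{z\in\mathbb C\setminus\mathbb R}\mathrm{ran}(B-z)=\{0\}$) and have deficiency indices $(n,n)$. For $z\in\mathbb C\setminus\mathbb R$ write $\ker(B^*-z):=\mathrm{ran}(B-\bar z)^\perp$. $b_w(z)=\frac{z-w}{z-\bar w}$; $b_w(B)=(B-w)(B-\bar w)^{-1}$ is an isometry of $\mathrm{ran}(B-\bar w)$ onto $\mathrm{ran}(B-w)$. $Q_w$ is the orthogonal projection onto $\mathrm{ran}(B-\bar w)$ and $P_w=1-Q_w$. A unitary $U$ on $\mathcal K\supseteq\mathcal H$ is a unitary dilation of a contraction $T$ on $\mathcal H$ if $T^k=P_{\mathcal H}U^k|_{\mathcal H}$ for all $k\ge0$; it is minimal if $\mathcal K$ is the smallest $U$-reducing subspace containing $\mathcal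 H$. *)

theory Defs
  imports "HOL-Analysis.Analysis"
begin

text \<open>A complex Hilbert space: a Banach space with a compatible complex scalar multiplication, whose norm satisfies the
parallelogram law (equivalently, the norm comes from an inner product, recovered
by polarization below).\<close>

class chilbert = banach +
  fixes cscale :: "complex \<Rightarrow> 'a \<Rightarrow> 'a"  (infixr \<open>*\<^sub>C\<close> 75)
  assumes cscale_add_right: "a *\<^sub>C (x + y) = a *\<^sub>C x + a *\<^sub>C y"
    and cscale_add_left: "(a + b) *\<^sub>C x = a *\<^sub>C x + b *\<^sub>C x"
    and cscale_cscale: "a *\<^sub>C (b *\<^sub>C x) = (a * b) *\<^sub>C x"
    and cscale_one: "1 *\<^sub>C x = x"
    and scaleR_cscale: "r *\<^sub>R x = complex_of_real r *\<^sub>C x"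
    and norm_cscale: "norm (a *\<^sub>C x) = cmod a * norm x"
    and parallelogram:
      "(norm (x + y))\<^sup>2 + (norm (x - y))\<^sup>2 = 2 * (norm x)\<^sup>2 + 2 * (norm y)\<^sup>2"

text \<open>Inner product via polarization (linear in the first argument).\<close>
definition cinner :: "'a::chilbert \<Rightarrow> 'a \<Rightarrow> complex" where
  "cinner x y = (\<Sum>k<(4::nat). \<i> ^ k * complex_of_real ((norm (x + (\<i> ^ k) *\<^sub>C y))\<^sup>2)) / 4"

definition separable_space :: "'a::chilbert itself \<Rightarrow> bool" where
  "separable_space _ \<longleftrightarrow> (\<exists>S::'a set. countable S \<and> closure S = UNIV)"

definition csubspace :: "'a::chilbert set \<Rightarrow> bool" where
  "csubspace M \<longleftrightarrow> 0 \<in> M \<and> (\<forall>x\<in>M. \<forall>y\<in>M. x + y \<in> M) \<and> (\<forall>c. \<forall>x\<in>M. c *\<^sub>C x \<in> M)"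

definition cspan :: "'a::chilbert set \<Rightarrow> 'a set" where
  "cspan S = {\<Sum>x\<in>F. c x *\<^sub>C x | F c. finite F \<and> F \<subseteq> S}"

definition clinear_on :: "'a::chilbert set \<Rightarrow> ('a \<Rightarrow> 'b::chilbert) \<Rightarrow> bool" where
  "clinear_on D f \<longleftrightarrow> (\<forall>x\<in>D. \<forall>y\<in>D. f (x + y) = f x + f y) \<and> (\<forall>c. \<forall>x\<in>D. f (c *\<^sub>C x) = c *\<^sub>C f x)"

definition orth :: "'a::chilbert set \<Rightarrow> 'a set" where
  "orth S = {y. \<forall>x\<in>S. cinner x y = 0}"

definition cproj :: "'a::chilbert set \<Rightarrow> 'a \<Rightarrow> 'a" where
  "cproj M h = (THE m. m \<in> M \<and> (\<forall>y\<in>M. cinner (h - m) y = 0))"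

definition has_cdim :: "'a::chilbert set \<Rightarrow> nat \<Rightarrow> bool" where
  "has_cdim S n \<longleftrightarrow> (\<exists>e::nat \<Rightarrow> 'a.
      (\<forall>i<n. \<forall>j<n. cinner (e i) (e j) = (if i = j then 1 else 0)) \<and>
      S = cspan (e ` {..<n}))"

definition ranB :: "('a::chilbert \<Rightarrow> 'a) \<Rightarrow> 'a set \<Rightarrow> complex \<Rightarrow> 'a set" where
  "ranB B D z = {B x - z *\<^sub>C x | x. x \<in> D}"

text \<open>ker(B^* - z) := ran(B - conj z)^perp\<close>
definition defect_space :: "('a::chilbert \<Rightarrow> 'a) \<Rightarrow> 'a set \<Rightarrow> complex \<Rightarrow> 'a set" where
  "defect_space B D z = orth (ranB B D (cnj z))"

text \<open>The class S_n(H): symmetric, closed, simple, deficiency indices (n,n).\<close>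
definition in_Sn :: "nat \<Rightarrow> ('a::chilbert \<Rightarrow> 'a) \<Rightarrow> 'a set \<Rightarrow> bool" where
  "in_Sn n B D \<longleftrightarrow>
     csubspace D \<and> clinear_on D B \<and>
     (\<forall>x\<in>D. \<forall>y\<in>D. cinner (B x) y = cinner x (B y)) \<and>
     closed {(x, B x) | x. x \<in> D} \<and>
     (\<Inter>z\<in>{z. Im z \<noteq> 0}. ranB B D z) = {0} \<and>
     (\<forall>z. Im z \<noteq> 0 \<longrightarrow> has_cdim (defect_space B D z) n)"

definition Qw :: "('a::chilbert \<Rightarrow> 'a) \<Rightarrow> 'a set \<Rightarrow> complex \<Rightarrow> 'a \<Rightarrow> 'a" where
  "Qw B D w = cproj (ranB B D (cnj w))"

definition Pw :: "('a::chilbert \<Rightarrow> 'a) \<Rightarrow> 'a set \<Rightarrow> complex \<Rightarrow> 'a \<Rightarrow> 'a" where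
  "Pw B D w h = h - Qw B D w h"

text \<open>b_w(B) = (B - w)(B - conj w)^{-1} on ran(B - conj w).\<close>
definition bwB :: "('a::chilbert \<Rightarrow> 'a) \<Rightarrow> 'a set \<Rightarrow> complex \<Rightarrow> 'a \<Rightarrow> 'a" where
  "bwB B D w y = (let x = (THE x. x \<in> D \<and> B x - cnj w *\<^sub>C x = y) in B x - w *\<^sub>C x)"

definition Vw :: "('a::chilbert \<Rightarrow> 'a) \<Rightarrow> 'a set \<Rightarrow> complex \<Rightarrow> 'a \<Rightarrow> 'a" where
  "Vw B D w h = bwB B D w (Qw B D w h)"

definition unitary_op :: "('k::chilbert \<Rightarrow> 'k) \<Rightarrow> bool" where
  "unitary_op U \<longleftrightarrow> clinear_on UNIV U \<and> bij U \<and> (\<forall>x. norm (U x) = norm x)"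

definition upow :: "('k \<Rightarrow> 'k) \<Rightarrow> int \<Rightarrow> 'k \<Rightarrow> 'k" where
  "upow U k = (if 0 \<le> k then U ^^ nat k else (inv U) ^^ nat (- k))"

text \<open>H is embedded in K by the isometric linear map J. U is a unitary dilation of T
if T^k = P_H U^k |_H for all k >= 0, and it is minimal if K is the smallest
U-reducing (closed) subspace containing H.\<close>
definition isometric_embedding :: "('h::chilbert \<Rightarrow> 'k::chilbert) \<Rightarrow> bool" where
  "isometric_embedding J \<longleftrightarrow> clinear_on UNIV J \<and> (\<forall>x. norm (J x) = norm x)"

definition unitary_dilation ::
  "('h::chilbert \<Rightarrow> 'k::chilbert) \<Rightarrow> ('k \<Rightarrow> 'k) \<Rightarrow> ('h \<Rightarrow> 'h) \<Rightarrow> bool" where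
  "unitary_dilation J U T \<longleftrightarrow> isometric_embedding J \<and> unitary_op U \<and>
     (\<forall>k::nat. \<forall>h. J ((T ^^ k) h) = cproj (range J) ((U ^^ k) (J h)))"

definition minimal_unitary_dilation ::
  "('h::chilbert \<Rightarrow> 'k::chilbert) \<Rightarrow> ('k \<Rightarrow> 'k) \<Rightarrow> ('h \<Rightarrow> 'h) \<Rightarrow> bool" where
  "minimal_unitary_dilation J U T \<longleftrightarrow> unitary_dilation J U T \<and>
     (\<forall>M. csubspace M \<and> closed M \<and> U ` M \<subseteq> M \<and> inv U ` M \<subseteq> M \<and> range J \<subseteq> M
          \<longrightarrow> M = UNIV)"

end

theory Submission
  imports Defs
begin


lemma cscale_real: "complex_of_real r *\<^sub>C x = r *\<^sub>R (x::'a::chilbert)"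
  by (simp add: scaleR_cscale)
lemma cscale_zero_left[simp]: "0 *\<^sub>C (x::'a::chilbert) = 0"
  using cscale_real[of 0 x] by simp
lemma cscale_minus_one: "(-1) *\<^sub>C (x::'a::chilbert) = - x"
  using cscale_real[of "-1" x] by simp
lemma cscale_zero_right[simp]: "c *\<^sub>C (0::'a::chilbert) = 0"
  using cscale_add_right[of c 0 0] by simp
lemma cscale_minus_right: "c *\<^sub>C (- x::'a::chilbert) = - (c *\<^sub>C x)"
  using cscale_add_right[of c x "-x"] by (metis add.right_inverse cscale_zero_right neg_eq_iff_add_eq_0)
lemma cscale_diff_right: "c *\<^sub>C (x - y::'a::chilbert) = c *\<^sub>C x - c *\<^sub>C y"
  using cscale_add_right[of c x "-y"] cscale_minus_right[of c y] by simp
lemma cscale_minus_left: "(- c) *\<^sub>C (x::'a::chilbert) = - (c *\<^sub>C x)"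
  using cscale_add_left[of c "-c" x] by (metis add.right_inverse cscale_zero_left neg_eq_iff_add_eq_0)
lemma cscale_diff_left: "(c - d) *\<^sub>C (x::'a::chilbert) = c *\<^sub>C x - d *\<^sub>C x"
  using cscale_add_left[of c "-d" x] cscale_minus_left[of d x] by simp

definition pr :: "'a::chilbert \<Rightarrow> 'a \<Rightarrow> real" where
  "pr x y = ((norm (x + y))\<^sup>2 - (norm (x - y))\<^sup>2) / 4"

lemma cinner_pr: "cinner x y = Complex (pr x y) (pr x (\<i> *\<^sub>C y))"
proof -
  have m: "x + (- \<i>) *\<^sub>C y = x - \<i> *\<^sub>C y" by (simp add: cscale_minus_left)
  have m1: "x + (- 1) *\<^sub>C y = x - y" by (simp add: cscale_minus_one)
  have s: "(\<Sum>k<(4::nat). \<i> ^ k * complex_of_real ((norm (x + (\<i> ^ k) *\<^sub>C y))\<^sup>2))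
     = complex_of_real ((norm (x + y))\<^sup>2) + \<i> * complex_of_real ((norm (x + \<i> *\<^sub>C y))\<^sup>2)
       - complex_of_real ((norm (x - y))\<^sup>2) - \<i> * complex_of_real ((norm (x - \<i> *\<^sub>C y))\<^sup>2)"
    by (simp add: numeral_eq_Suc m m1 cscale_one del: of_real_power)
  show ?thesis unfolding cinner_def s pr_def
    by (simp add: complex_eq_iff m cscale_minus_left)
qed


lemma pr_sym: "pr x y = pr y x"
  unfolding pr_def by (simp add: add.commute norm_minus_commute)

lemma pr_minus_left: "pr (- x) y = - pr x y"
proof -
  have "norm (- x + y) = norm (x - y)" by (simp add: norm_minus_commute)
  moreover have "norm (- x - y) = norm (x + y)" using norm_minus_cancel[of "x+y"] by (simp add: algebra_simps)
  ultimately show ?thesis unfolding pr_def by (simp only:) (simp add: field_simps)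
qed

lemma pr_zero_left[simp]: "pr 0 y = 0"
  unfolding pr_def by simp

lemma ar1: "(A::real) + C = 2*E + 2*G \<Longrightarrow> B + D = 2*F + 2*G \<Longrightarrow> (A - B)/4 + (C - D)/4 = 2*((E-F)/4)"
  by (simp add: field_simps)
lemma ar2: "(A::real) \<le> S \<Longrightarrow> T \<le> B \<Longrightarrow> B \<le> S \<Longrightarrow> T \<le> A \<Longrightarrow> S - T = 4 * P \<Longrightarrow> \<bar>(A - B)/4\<bar> \<le> P"
  by (simp add: abs_le_iff)

lemma pr_step1: "pr (x + x') y + pr (x - x') y = 2 * pr x y"
proof -
  have p1: "(norm (x + x' + y))\<^sup>2 + (norm (x - x' + y))\<^sup>2 = 2 * (norm (x + y))\<^sup>2 + 2 * (norm x')\<^sup>2"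
  proof -
    have "x + x' + y = (x + y) + x'" "x - x' + y = (x + y) - x'" by (simp_all add: algebra_simps)
    then show ?thesis using parallelogram[of "x + y" x'] by (simp only:)
  qed
  have p2: "(norm (x + x' - y))\<^sup>2 + (norm (x - x' - y))\<^sup>2 = 2 * (norm (x - y))\<^sup>2 + 2 * (norm x')\<^sup>2"
  proof -
    have "x + x' - y = (x - y) + x'" "x - x' - y = (x - y) - x'" by (simp_all add: algebra_simps)
    then show ?thesis using parallelogram[of "x - y" x'] by (simp only:)
  qed
  show ?thesis unfolding pr_def by (rule ar1[OF p1 p2])
qed

lemma pr_add_left: "pr (u + v) y = pr u y + pr v y"
proof -
  define x where "x = (1/2::real) *\<^sub>R (u + v)"
  define x' where "x' = (1/2::real) *\<^sub>R (u - v)"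
  have a: "x + x' = u" unfolding x_def x'_def by (simp add: algebra_simps scaleR_2[symmetric] del: scaleR_2)
  have b: "x - x' = v" unfolding x_def x'_def by (simp add: algebra_simps scaleR_2[symmetric] del: scaleR_2)
  have c: "x + x = u + v" unfolding x_def by (simp add: scaleR_2[symmetric] del: scaleR_2)
  have "pr u y + pr v y = 2 * pr x y" using pr_step1[of x x' y] a b by simp
  also have "\<dots> = pr (u + v) y" using pr_step1[of x x y] c by simp
  finally show ?thesis by simp
qed

lemma pr_diff_left: "pr (u - v) y = pr u y - pr v y"
  using pr_add_left[of u "- v" y] pr_minus_left[of v y] by simp

lemma pr_bound: "\<bar>pr x y\<bar> \<le> norm x * norm y"
proof -
  have t1: "norm (x + y) \<le> norm x + norm y" by (rule norm_triangle_ineq)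
  have t2: "\<bar>norm x - norm y\<bar> \<le> norm (x - y)" by (rule norm_triangle_ineq3)
  have t3: "norm (x - y) \<le> norm x + norm y" by (rule norm_triangle_ineq4)
  have t4: "\<bar>norm x - norm y\<bar> \<le> norm (x + y)"
    using norm_triangle_ineq3[of x "- y"] by simp
  have s1: "(norm (x + y))\<^sup>2 \<le> (norm x + norm y)\<^sup>2" by (rule power_mono[OF t1 norm_ge_zero])
  have s2: "(norm x - norm y)\<^sup>2 \<le> (norm (x - y))\<^sup>2"
    using power_mono[OF t2 abs_ge_zero, of 2] by (simp only: power2_abs)
  have s3: "(norm (x - y))\<^sup>2 \<le> (norm x + norm y)\<^sup>2" by (rule power_mono[OF t3 norm_ge_zero])
  have s4: "(norm x - norm y)\<^sup>2 \<le> (norm (x + y))\<^sup>2"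
    using power_mono[OF t4 abs_ge_zero, of 2] by (simp only: power2_abs)
  have s5: "(norm x + norm y)\<^sup>2 - (norm x - norm y)\<^sup>2 = 4 * (norm x * norm y)"
    by (simp add: power2_eq_square algebra_simps)
  show ?thesis unfolding pr_def by (rule ar2[OF s1 s2 s3 s4 s5])
qed

lemma pr_of_nat_left: "pr (real n *\<^sub>R x) y = real n * pr x y"
proof (induction n)
  case 0 then show ?case by simp
next
  case (Suc n)
  have "real (Suc n) *\<^sub>R x = real n *\<^sub>R x + x" by (simp add: algebra_simps)
  then show ?case using Suc pr_add_left[of "real n *\<^sub>R x" x y] by (simp add: algebra_simps)
qed

lemma pr_of_int_left: "pr (real_of_int k *\<^sub>R x) y = real_of_int k * pr x y"
proof (cases "k \<ge> 0")
  case True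
  then obtain n where "k = int n" by (metis nonneg_eq_int)
  then show ?thesis using pr_of_nat_left[of n x y] by simp
next
  case False
  define n where "n = nat (- k)"
  have n: "k = - int n" using False unfolding n_def by simp
  have "real_of_int k *\<^sub>R x = - (real n *\<^sub>R x)" using n by simp
  then show ?thesis using pr_of_nat_left[of n x y] pr_minus_left[of "real n *\<^sub>R x" y] n by simp
qed

lemma pr_scaleR_left: "pr (r *\<^sub>R x) y = r * pr x y"
proof -
  define g where "g t = pr (t *\<^sub>R x) y - t * pr x y" for t
  define C where "C = norm x * norm y + \<bar>pr x y\<bar>"
  have gadd: "g (a + b) = g a + g b" for a b
    unfolding g_def by (simp add: scaleR_add_left pr_add_left algebra_simps)
  have gint: "g (real_of_int k) = 0" for k
    unfolding g_def by (simp add: pr_of_int_left)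
  have gbound: "\<bar>g t\<bar> \<le> \<bar>t\<bar> * C" for t
  proof -
    have "\<bar>pr (t *\<^sub>R x) y\<bar> \<le> \<bar>t\<bar> * (norm x * norm y)"
      using pr_bound[of "t *\<^sub>R x" y] by (simp add: mult.assoc)
    moreover have "\<bar>t * pr x y\<bar> = \<bar>t\<bar> * \<bar>pr x y\<bar>" by (simp add: abs_mult)
    ultimately show ?thesis unfolding g_def C_def by (simp add: distrib_left)
  qed
  have gnat: "g (real n * t) = real n * g t" for n t
    unfolding g_def using pr_of_nat_left[of n "t *\<^sub>R x" y] by (simp add: algebra_simps)
  have C0: "C \<ge> 0" unfolding C_def by simp
  have small: "real n * \<bar>g r\<bar> \<le> C" for n
  proof -
    define f where "f = real n * r - real_of_int \<lfloor>real n * r\<rfloor>"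
    have f01: "0 \<le> f" "f < 1" unfolding f_def by linarith+
    have "g (real n * r) = g (real_of_int \<lfloor>real n * r\<rfloor>) + g f"
      using gadd[of "real_of_int \<lfloor>real n * r\<rfloor>" f] unfolding f_def by simp
    then have "g (real n * r) = g f" using gint by simp
    then have "real n * g r = g f" using gnat by simp
    moreover have "\<bar>g f\<bar> \<le> C" using gbound[of f] f01 C0
      by (smt (verit) mult_left_le_one_le)
    ultimately show ?thesis by (simp add: abs_mult)
  qed
  have "g r = 0"
  proof (rule ccontr)
    assume "g r \<noteq> 0"
    then have pos: "\<bar>g r\<bar> > 0" by simp
    obtain n where "real n > C / \<bar>g r\<bar>" using reals_Archimedean2 by blast
    then have "real n * \<bar>g r\<bar> > C" using pos by (simp add: field_simps)
    then show False using small[of n] by simp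
  qed
  then show ?thesis unfolding g_def by simp
qed

lemma norm_i_cscale[simp]: "norm (\<i> *\<^sub>C (x::'a::chilbert)) = norm x"
  by (simp add: norm_cscale)

lemma pr_i_i: "pr (\<i> *\<^sub>C x) (\<i> *\<^sub>C y) = pr x y"
  unfolding pr_def by (simp add: cscale_add_right[symmetric] cscale_diff_right[symmetric])

lemma ii_cscale: "\<i> *\<^sub>C (\<i> *\<^sub>C (x::'a::chilbert)) = - x"
  by (simp add: cscale_cscale cscale_minus_one)

lemma pr_i_left: "pr (\<i> *\<^sub>C x) y = - pr x (\<i> *\<^sub>C y)"
proof -
  have "pr (\<i> *\<^sub>C x) y = pr (\<i> *\<^sub>C (\<i> *\<^sub>C x)) (\<i> *\<^sub>C y)" by (simp add: pr_i_i)
  also have "\<dots> = - pr x (\<i> *\<^sub>C y)" by (simp add: ii_cscale pr_minus_left)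
  finally show ?thesis .
qed

lemma cinner_add_left: "cinner (x + y) z = cinner x z + cinner y z"
  by (simp add: cinner_pr pr_add_left complex_eq_iff)

lemma cscale_decomp: "c *\<^sub>C x = Re c *\<^sub>R x + Im c *\<^sub>R (\<i> *\<^sub>C (x::'a::chilbert))"
proof -
  have "c = complex_of_real (Re c) + complex_of_real (Im c) * \<i>" by (simp add: complex_eq_iff)
  then have "c *\<^sub>C x = (complex_of_real (Re c) + complex_of_real (Im c) * \<i>) *\<^sub>C x" by simp
  also have "\<dots> = Re c *\<^sub>R x + Im c *\<^sub>R (\<i> *\<^sub>C x)"
    by (simp add: cscale_add_left cscale_cscale[symmetric] cscale_real)
  finally show ?thesis .
qed

lemma cinner_cscale_left: "cinner (c *\<^sub>C x) y = c * cinner x y"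
proof -
  have "cinner (c *\<^sub>C x) y = Complex (Re c * pr x y + Im c * pr (\<i> *\<^sub>C x) y)
            (Re c * pr x (\<i> *\<^sub>C y) + Im c * pr (\<i> *\<^sub>C x) (\<i> *\<^sub>C y))"
    unfolding cinner_pr cscale_decomp[of c x] by (simp add: pr_add_left pr_scaleR_left)
  also have "\<dots> = Complex (Re c * pr x y - Im c * pr x (\<i> *\<^sub>C y)) (Re c * pr x (\<i> *\<^sub>C y) + Im c * pr x y)"
    by (simp only: pr_i_i) (simp add: pr_i_left)
  also have "\<dots> = c * cinner x y"
    by (simp add: cinner_pr complex_eq_iff)
  finally show ?thesis .
qed

lemma cinner_commute: "cinner y x = cnj (cinner x y)"
proof -
  have "pr y (\<i> *\<^sub>C x) = - pr x (\<i> *\<^sub>C y)" using pr_sym[of y "\<i> *\<^sub>C x"] pr_i_left[of x y] by simp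
  then show ?thesis by (simp add: cinner_pr complex_eq_iff pr_sym)
qed

lemma cinner_self: "cinner x x = complex_of_real ((norm x)\<^sup>2)"
proof -
  have a: "x + x = 2 *\<^sub>R x" by (simp add: scaleR_2)
  have "pr x x = (norm x)\<^sup>2" unfolding pr_def a by (simp add: power_mult_distrib)
  moreover have "pr x (\<i> *\<^sub>C x) = 0"
  proof -
    have "pr x (\<i> *\<^sub>C x) = pr (\<i> *\<^sub>C x) x" by (rule pr_sym)
    also have "\<dots> = - pr x (\<i> *\<^sub>C x)" by (rule pr_i_left)
    finally show ?thesis by simp
  qed
  ultimately show ?thesis by (simp add: cinner_pr complex_eq_iff)
qed

lemma cinner_zero_left[simp]: "cinner 0 y = 0"
  using cinner_add_left[of 0 0 y] by simp
lemma cinner_minus_left: "cinner (- x) y = - cinner x y"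
  using cinner_add_left[of x "- x" y] by (simp add: eq_neg_iff_add_eq_0 add.commute)
lemma cinner_diff_left: "cinner (x - y) z = cinner x z - cinner y z"
  using cinner_add_left[of x "- y" z] cinner_minus_left[of y z] by simp
lemma cinner_scaleR_left: "cinner (r *\<^sub>R x) y = complex_of_real r * cinner x y"
  by (simp add: cscale_real[symmetric] cinner_cscale_left)
lemma cinner_sum_left: "cinner (\<Sum>i\<in>F. f i) y = (\<Sum>i\<in>F. cinner (f i) y)"
  by (induction F rule: infinite_finite_induct) (auto simp: cinner_add_left)

lemma cinner_add_right: "cinner x (y + z) = cinner x y + cinner x z"
  by (subst (1 2 3) cinner_commute) (simp add: cinner_add_left)
lemma cinner_cscale_right: "cinner x (c *\<^sub>C y) = cnj c * cinner x y"
  by (subst (1 2) cinner_commute) (simp add: cinner_cscale_left)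
lemma cinner_zero_right[simp]: "cinner x 0 = 0"
  by (subst cinner_commute) simp
lemma cinner_minus_right: "cinner x (- y) = - cinner x y"
  by (subst (1 2) cinner_commute) (simp add: cinner_minus_left)
lemma cinner_diff_right: "cinner x (y - z) = cinner x y - cinner x z"
  by (subst (1 2 3) cinner_commute) (simp add: cinner_diff_left)

lemma cinner_self_eq_zero: "cinner x x = 0 \<longleftrightarrow> x = 0"
  by (simp add: cinner_self)

lemma norm_add_sq: "(norm (x + y))\<^sup>2 = (norm x)\<^sup>2 + (norm y)\<^sup>2 + 2 * Re (cinner x y)"
proof -
  have "complex_of_real ((norm (x + y))\<^sup>2) = cinner (x + y) (x + y)" by (simp add: cinner_self)
  also have "\<dots> = cinner x x + cinner y y + cinner x y + cinner y x"
    by (simp add: cinner_add_left cinner_add_right)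
  finally have "complex_of_real ((norm (x + y))\<^sup>2) = cinner x x + cinner y y + cinner x y + cnj (cinner x y)"
    by (simp add: cinner_commute[of y x])
  then have "(norm (x + y))\<^sup>2 = Re (cinner x x + cinner y y + cinner x y + cnj (cinner x y))"
    by (metis Re_complex_of_real)
  then show ?thesis by (simp add: cinner_self)
qed

lemma pythag: "cinner x y = 0 \<Longrightarrow> (norm (x + y))\<^sup>2 = (norm x)\<^sup>2 + (norm y)\<^sup>2"
  by (simp add: norm_add_sq)

lemma bounded_linear_cscale: "bounded_linear (\<lambda>y::'a::chilbert. c *\<^sub>C y)"
proof
  show "c *\<^sub>C (x + y) = c *\<^sub>C x + c *\<^sub>C y" for x y :: 'a by (rule cscale_add_right)
  show "c *\<^sub>C (r *\<^sub>R x) = r *\<^sub>R (c *\<^sub>C x)" for r and x :: 'a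
    by (simp add: cscale_real[symmetric] cscale_cscale mult.commute)
  show "\<exists>K. \<forall>x::'a. norm (c *\<^sub>C x) \<le> norm x * K"
    by (rule exI[of _ "cmod c"]) (simp add: norm_cscale mult.commute)
qed

lemma tendsto_cinner_left:
  assumes "(f \<longlongrightarrow> a) F" shows "((\<lambda>n. cinner (f n) y) \<longlongrightarrow> cinner a y) F"
  unfolding cinner_def by (auto intro!: tendsto_intros assms)

lemma tendsto_cscale:
  assumes "(f \<longlongrightarrow> a) F" shows "((\<lambda>n. c *\<^sub>C f n) \<longlongrightarrow> c *\<^sub>C a) F"
  using bounded_linear.tendsto[OF bounded_linear_cscale assms] .

lemma tendsto_cinner_right:
  assumes "(f \<longlongrightarrow> a) F" shows "((\<lambda>n. cinner y (f n)) \<longlongrightarrow> cinner y a) F"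
proof -
  have "((\<lambda>n. cnj (cinner (f n) y)) \<longlongrightarrow> cnj (cinner a y)) F"
    by (intro tendsto_cnj tendsto_cinner_left assms)
  then show ?thesis by (subst (1 2) cinner_commute) simp
qed

lemma cinner_isometry:
  assumes "\<And>a b. T (a + b) = T a + T b" "\<And>c a. T (c *\<^sub>C a) = c *\<^sub>C T a" "\<And>a. norm (T a) = norm a"
  shows "cinner (T x) (T y) = cinner x y"
proof -
  have "norm (T x + c *\<^sub>C T y) = norm (x + c *\<^sub>C y)" for c
    using assms(1)[of x "c *\<^sub>C y"] assms(2)[of c y] assms(3)[of "x + c *\<^sub>C y"] by simp
  then show ?thesis unfolding cinner_def by simp
qed




lemma csub_zero: "csubspace M \<Longrightarrow> 0 \<in> M" by (simp add: csubspace_def)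
lemma csub_add: "csubspace M \<Longrightarrow> x \<in> M \<Longrightarrow> y \<in> M \<Longrightarrow> x + y \<in> M" by (simp add: csubspace_def)
lemma csub_cscale: "csubspace M \<Longrightarrow> x \<in> M \<Longrightarrow> c *\<^sub>C x \<in> M" by (simp add: csubspace_def)
lemma csub_scaleR: "csubspace M \<Longrightarrow> x \<in> M \<Longrightarrow> r *\<^sub>R x \<in> M"
  using csub_cscale[of M x "complex_of_real r"] by (simp add: cscale_real)
lemma csub_minus: "csubspace M \<Longrightarrow> x \<in> M \<Longrightarrow> - x \<in> M"
  using csub_cscale[of M x "-1"] by (simp add: cscale_minus_one)
lemma csub_diff: "csubspace M \<Longrightarrow> x \<in> M \<Longrightarrow> y \<in> M \<Longrightarrow> x - y \<in> M"
  using csub_add[of M x "- y"] csub_minus[of M y] by simp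
lemma csub_sum: "csubspace M \<Longrightarrow> (\<And>i. i \<in> F \<Longrightarrow> f i \<in> M) \<Longrightarrow> (\<Sum>i\<in>F. f i) \<in> M"
  by (induction F rule: infinite_finite_induct) (auto simp: csub_zero csub_add)

lemma orth_csubspace: "csubspace (orth S)"
  unfolding csubspace_def orth_def by (simp add: cinner_add_right cinner_cscale_right)

lemma orth_closed: "closed (orth (S::'a::chilbert set))"
proof -
  have "orth S = (\<Inter>x\<in>S. {y. cinner x y = 0})" unfolding orth_def by auto
  moreover have "closed {y. cinner x y = 0}" for x :: 'a
  proof (rule closed_sequential_limits[THEN iffD2], intro allI impI)
    fix f l assume a: "(\<forall>n. f n \<in> {y. cinner x y = 0}) \<and> f \<longlonglongrightarrow> l"
    then have "(\<lambda>n. cinner x (f n)) \<longlonglongrightarrow> cinner x l" by (intro tendsto_cinner_right) simp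
    moreover have "(\<lambda>n. cinner x (f n)) = (\<lambda>n. 0)" using a by auto
    ultimately have "(\<lambda>n. 0) \<longlonglongrightarrow> cinner x l" by simp
    then show "l \<in> {y. cinner x y = 0}" by (simp add: LIMSEQ_const_iff)
  qed
  ultimately show ?thesis by auto
qed

lemma cproj_eqI:
  assumes "csubspace M" "m \<in> M" "\<forall>y\<in>M. cinner (h - m) y = 0"
  shows "cproj M h = m"
  unfolding cproj_def
proof (rule the_equality)
  show "m \<in> M \<and> (\<forall>y\<in>M. cinner (h - m) y = 0)" using assms by simp
  fix m' assume m': "m' \<in> M \<and> (\<forall>y\<in>M. cinner (h - m') y = 0)"
  have d: "m - m' \<in> M" using assms m' csub_diff by blast
  have "cinner (m - m') (m - m') = cinner (h - m') (m - m') - cinner (h - m) (m - m')"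
    by (simp add: cinner_diff_left[symmetric])
  also have "\<dots> = 0" using assms m' d by simp
  finally show "m' = m" by (simp add: cinner_self_eq_zero)
qed

lemma min_orth:
  assumes M: "csubspace M" and p: "p \<in> M" and mn: "\<forall>y\<in>M. norm (h - p) \<le> norm (h - y)"
    and y: "y \<in> M"
  shows "cinner (h - p) y = 0"
proof (rule ccontr)
  define z where "z = h - p"
  define c where "c = cinner z y"
  assume "cinner (h - p) y \<noteq> 0"
  then have c0: "c \<noteq> 0" unfolding c_def z_def by simp
  define s where "s = 1 / ((norm y)\<^sup>2 + 1)"
  have sp: "(norm y)\<^sup>2 + 1 > 0" by (simp add: add_nonneg_pos)
  have s0: "s > 0" unfolding s_def using sp by simp
  have s1: "s * (norm y)\<^sup>2 < 1" unfolding s_def using sp by (simp add: field_simps)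
  define t where "t = complex_of_real s * c"
  have yM: "p + t *\<^sub>C y \<in> M" using M p y csub_add csub_cscale by blast
  have e: "h - (p + t *\<^sub>C y) = z + (- t) *\<^sub>C y" unfolding z_def by (simp add: cscale_minus_left)
  have cc: "cnj c * c = (complex_of_real (cmod c))\<^sup>2" using complex_norm_square[of c] by (simp add: mult.commute)
  have i: "cinner z ((- t) *\<^sub>C y) = - complex_of_real (s * (cmod c)\<^sup>2)"
    unfolding t_def by (simp add: cinner_cscale_right c_def[symmetric] mult.assoc cc)
  have n: "norm ((- t) *\<^sub>C y) = s * cmod c * norm y"
    unfolding t_def using s0 by (simp add: norm_cscale norm_mult)
  have "(norm z)\<^sup>2 \<le> (norm (z + (- t) *\<^sub>C y))\<^sup>2"
    using mn[rule_format, OF yM] e unfolding z_def by (simp add: power_mono)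
  also have "\<dots> = (norm z)\<^sup>2 + (s * cmod c * norm y)\<^sup>2 - 2 * (s * (cmod c)\<^sup>2)"
    by (simp add: norm_add_sq i n)
  finally have "2 * (s * (cmod c)\<^sup>2) \<le> (s * cmod c * norm y)\<^sup>2" by simp
  then have "2 * (s * (cmod c)\<^sup>2) \<le> (s * (norm y)\<^sup>2) * (s * (cmod c)\<^sup>2)"
    by (simp add: power_mult_distrib power2_eq_square algebra_simps)
  moreover have "s * (cmod c)\<^sup>2 > 0" using s0 c0 by simp
  ultimately have "2 \<le> s * (norm y)\<^sup>2" using mult_le_cancel_right_pos by blast
  then show False using s1 by simp
qed

lemma sq_bound_aux:
  fixes a d e :: real
  assumes "0 \<le> a" "a < d + e" "0 \<le> d" "0 \<le> e" "e \<le> 1"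
  shows "a\<^sup>2 \<le> d\<^sup>2 + (2 * d + 1) * e"
proof -
  have "a\<^sup>2 \<le> (d + e)\<^sup>2" using assms by (simp add: power_mono)
  also have "\<dots> = d\<^sup>2 + 2 * d * e + e * e" by (simp add: power2_eq_square algebra_simps)
  also have "e * e \<le> e" using assms by (simp add: mult_left_le_one_le)
  then have "d\<^sup>2 + 2 * d * e + e * e \<le> d\<^sup>2 + (2 * d + 1) * e" by (simp add: algebra_simps)
  finally show ?thesis .
qed

lemma min_exists:
  fixes M :: "'a::chilbert set"
  assumes M: "csubspace M" and cl: "closed M"
  shows "\<exists>p\<in>M. \<forall>y\<in>M. norm (h - p) \<le> norm (h - y)"
proof -
  define d where "d = infdist h M"
  define e where "e n = inverse (real (Suc n))" for n
  have ne: "M \<noteq> {}" using csub_zero[OF M] by auto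
  have d0: "d \<ge> 0" unfolding d_def by (rule infdist_nonneg)
  have dle: "d \<le> norm (h - y)" if "y \<in> M" for y
    unfolding d_def using infdist_le[OF that, of h] by (simp add: dist_norm)
  have e0: "e n > 0" "e n \<le> 1" for n unfolding e_def by (auto simp: field_simps)
  have e0': "e n \<ge> 0" for n using e0(1)[of n] by simp
  have "\<exists>m\<in>M. norm (h - m) < d + e n" for n
  proof -
    have "d < d + e n" using e0 by simp
    then have "(INF a\<in>M. dist h a) < d + e n" unfolding d_def infdist_notempty[OF ne] .
    then show ?thesis
      by (subst (asm) cINF_less_iff[OF ne]) (auto simp: dist_norm intro: bdd_belowI2[of _ 0])
  qed
  then obtain m where mM: "\<And>n. m n \<in> M" and ml: "\<And>n. norm (h - m n) < d + e n" by metis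
  have bnd: "(norm (m i - m j))\<^sup>2 \<le> (4 * d + 2) * (e i + e j)" for i j
  proof -
    define a where "a = h - m i"
    define b where "b = h - m j"
    define q where "q = (1/2::real) *\<^sub>R (m i + m j)"
    have qM: "q \<in> M" unfolding q_def using M mM csub_add csub_scaleR by blast
    have ab: "a + b = 2 *\<^sub>R (h - q)" unfolding a_def b_def q_def
      by (simp add: algebra_simps scaleR_2[symmetric] del: scaleR_2)
    have ab2: "a - b = - (m i - m j)" unfolding a_def b_def by simp
    have "(norm (a + b))\<^sup>2 = 4 * (norm (h - q))\<^sup>2" unfolding ab by (simp add: power_mult_distrib)
    moreover have "d\<^sup>2 \<le> (norm (h - q))\<^sup>2" using dle[OF qM] d0 by (simp add: power_mono)
    moreover have "(norm a)\<^sup>2 \<le> d\<^sup>2 + (2 * d + 1) * e i"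
      unfolding a_def by (rule sq_bound_aux[OF norm_ge_zero ml d0]) (use e0' e0(2) in auto)
    moreover have "(norm b)\<^sup>2 \<le> d\<^sup>2 + (2 * d + 1) * e j"
      unfolding b_def by (rule sq_bound_aux[OF norm_ge_zero ml d0]) (use e0' e0(2) in auto)
    moreover have "(norm (a + b))\<^sup>2 + (norm (m i - m j))\<^sup>2 = 2 * (norm a)\<^sup>2 + 2 * (norm b)\<^sup>2"
      using parallelogram[of a b] unfolding ab2 by (simp add: norm_minus_commute)
    ultimately show ?thesis by (simp add: algebra_simps)
  qed
  have "Cauchy m"
  proof (rule CauchyI)
    fix \<epsilon> :: real assume ep: "\<epsilon> > 0"
    obtain N where N: "real N > (4 * d + 2) * 2 / \<epsilon>\<^sup>2" using reals_Archimedean2 by blast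
    have q: "(4 * d + 2) * 2 < real N * \<epsilon>\<^sup>2" using N ep by (simp add: field_simps)
    have ep2: "\<epsilon>\<^sup>2 > 0" using ep by simp
    have "\<epsilon>\<^sup>2 * real (Suc N) = \<epsilon>\<^sup>2 + real N * \<epsilon>\<^sup>2" by (simp add: algebra_simps)
    then have A: "(4 * d + 2) * 2 < \<epsilon>\<^sup>2 * real (Suc N)" using q ep2 by linarith
    have "(4 * d + 2) * (2 * inverse (real (Suc N))) = ((4 * d + 2) * 2) / real (Suc N)"
      by (simp add: field_simps)
    also have "\<dots> < \<epsilon>\<^sup>2" using A by (simp add: divide_less_eq)
    finally have key: "(4 * d + 2) * (2 * inverse (real (Suc N))) < \<epsilon>\<^sup>2" .
    show "\<exists>M. \<forall>i\<ge>M. \<forall>j\<ge>M. norm (m i - m j) < \<epsilon>"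
    proof (intro exI allI impI)
      fix i j assume ij: "N \<le> i" "N \<le> j"
      have "e i \<le> inverse (real (Suc N))" "e j \<le> inverse (real (Suc N))"
        unfolding e_def using ij by (auto intro!: le_imp_inverse_le)
      then have "(4 * d + 2) * (e i + e j) \<le> (4 * d + 2) * (2 * inverse (real (Suc N)))"
        using d0 by (intro mult_left_mono) auto
      then have "(norm (m i - m j))\<^sup>2 < \<epsilon>\<^sup>2" using bnd[of i j] key by linarith
      then show "norm (m i - m j) < \<epsilon>" using ep by (simp add: power_less_imp_less_base)
    qed
  qed
  then obtain p where mp: "m \<longlonglongrightarrow> p" using Cauchy_convergent_iff convergent_def by blast
  have pM: "p \<in> M" using cl mM mp closed_sequentially by blast
  have "norm (h - p) \<le> d"
  proof (rule LIMSEQ_le)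
    show "(\<lambda>n. norm (h - m n)) \<longlonglongrightarrow> norm (h - p)" by (intro tendsto_intros mp)
    show "(\<lambda>n. d + e n) \<longlonglongrightarrow> d"
      unfolding e_def using tendsto_add[OF tendsto_const LIMSEQ_inverse_real_of_nat, of d] by simp
    show "\<exists>N. \<forall>n\<ge>N. norm (h - m n) \<le> d + e n" using ml less_imp_le by blast
  qed
  then show ?thesis using pM dle by force
qed

lemma proj_exists:
  fixes M :: "'a::chilbert set"
  assumes "csubspace M" "closed M"
  shows "cproj M h \<in> M \<and> (\<forall>y\<in>M. cinner (h - cproj M h) y = 0)"
proof -
  obtain p where p: "p \<in> M" "\<forall>y\<in>M. norm (h - p) \<le> norm (h - y)" using min_exists[OF assms] by blast
  have o: "\<forall>y\<in>M. cinner (h - p) y = 0" using min_orth[OF assms(1) p] by blast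
  have "cproj M h = p" by (rule cproj_eqI[OF assms(1) p(1) o])
  then show ?thesis using p o by simp
qed




locale opB =
  fixes n :: nat and B :: "'h::chilbert \<Rightarrow> 'h" and D :: "'h set" and w :: complex
  assumes S: "in_Sn n B D" and wIm: "Im w \<noteq> 0"
begin

lemma D_sub: "csubspace D" using S by (simp add: in_Sn_def)
lemma B_add: "x \<in> D \<Longrightarrow> y \<in> D \<Longrightarrow> B (x + y) = B x + B y"
  using S by (simp add: in_Sn_def clinear_on_def)
lemma B_scale: "x \<in> D \<Longrightarrow> B (c *\<^sub>C x) = c *\<^sub>C B x"
  using S by (simp add: in_Sn_def clinear_on_def)
lemma B_sym: "x \<in> D \<Longrightarrow> y \<in> D \<Longrightarrow> cinner (B x) y = cinner x (B y)"
  using S by (simp add: in_Sn_def)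
lemma B_graph: "closed {(x, B x) | x. x \<in> D}"
  using S by (simp add: in_Sn_def)
lemma B_zero: "B 0 = 0"
  using B_add[of 0 0] csub_zero[OF D_sub] by simp
lemma B_diff: "x \<in> D \<Longrightarrow> y \<in> D \<Longrightarrow> B (x - y) = B x - B y"
proof -
  assume x: "x \<in> D" and y: "y \<in> D"
  have m: "(-1) *\<^sub>C y \<in> D" using csub_cscale[OF D_sub y] .
  have "B (x - y) = B (x + (-1) *\<^sub>C y)" by (simp add: cscale_minus_one)
  also have "\<dots> = B x - B y" using B_add[OF x m] B_scale[OF y, of "-1"] by (simp add: cscale_minus_one)
  finally show ?thesis .
qed

lemma Bxx_real: "x \<in> D \<Longrightarrow> Im (cinner (B x) x) = 0"
proof -
  assume x: "x \<in> D"
  have "cinner (B x) x = cinner x (B x)" by (rule B_sym[OF x x])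
  also have "\<dots> = cnj (cinner (B x) x)" by (rule cinner_commute)
  finally have e: "cinner (B x) x = cnj (cinner (B x) x)" .
  show ?thesis using arg_cong[OF e, of Im] by simp
qed

lemma cinner_scaleR_right: "cinner u (r *\<^sub>R v) = complex_of_real r * cinner u v"
  by (simp add: cscale_real[symmetric] cinner_cscale_right)

lemma norm_shift:
  assumes x: "x \<in> D"
  shows "(norm (B x - a *\<^sub>C x))\<^sup>2 = (norm (B x - Re a *\<^sub>R x))\<^sup>2 + (Im a)\<^sup>2 * (norm x)\<^sup>2"
proof -
  define u where "u = B x - Re a *\<^sub>R x"
  have e: "B x - a *\<^sub>C x = u + (- Im a) *\<^sub>R (\<i> *\<^sub>C x)"
    unfolding u_def cscale_decomp[of a x] by (simp add: algebra_simps)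
  have r: "Im (cinner u x) = 0"
    unfolding u_def using Bxx_real[OF x] by (simp add: cinner_diff_left cinner_scaleR_left cinner_self)
  have i: "Re (cinner u ((- Im a) *\<^sub>R (\<i> *\<^sub>C x))) = 0"
    using r by (simp add: cinner_minus_right cinner_scaleR_right cinner_cscale_right)
  have n: "norm ((- Im a) *\<^sub>R (\<i> *\<^sub>C x)) = \<bar>Im a\<bar> * norm x" by simp
  show ?thesis unfolding e norm_add_sq i n u_def[symmetric] by (simp add: power_mult_distrib)
qed

lemma lower:
  assumes x: "x \<in> D"
  shows "\<bar>Im a\<bar> * norm x \<le> norm (B x - a *\<^sub>C x)"
proof -
  have "(\<bar>Im a\<bar> * norm x)\<^sup>2 \<le> (norm (B x - a *\<^sub>C x))\<^sup>2"
    unfolding norm_shift[OF x] by (simp add: power_mult_distrib)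
  then show ?thesis by (rule power2_le_imp_le) simp
qed

lemma ran_sub: "csubspace (ranB B D a)"
proof -
  have "0 \<in> ranB B D a" unfolding ranB_def using csub_zero[OF D_sub] B_zero by force
  moreover have "p + q \<in> ranB B D a" if pq: "p \<in> ranB B D a" "q \<in> ranB B D a" for p q
  proof -
    obtain x y where xy: "x \<in> D" "y \<in> D" "p = B x - a *\<^sub>C x" "q = B y - a *\<^sub>C y"
      using pq unfolding ranB_def by blast
    have "p + q = B (x + y) - a *\<^sub>C (x + y)" using xy B_add by (simp add: cscale_add_right)
    then show ?thesis unfolding ranB_def using csub_add[OF D_sub xy(1,2)] by blast
  qed
  moreover have "c *\<^sub>C p \<in> ranB B D a" if pq: "p \<in> ranB B D a" for p c
  proof -
    obtain x where xy: "x \<in> D" "p = B x - a *\<^sub>C x"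
      using pq unfolding ranB_def by blast
    have "c *\<^sub>C p = B (c *\<^sub>C x) - a *\<^sub>C (c *\<^sub>C x)" using xy B_scale
      by (simp add: cscale_diff_right cscale_cscale mult.commute)
    then show ?thesis unfolding ranB_def using csub_cscale[OF D_sub xy(1)] by blast
  qed
  ultimately show ?thesis unfolding csubspace_def by blast
qed

lemma uniq:
  assumes "Im a \<noteq> 0" "x \<in> D" "y \<in> D" "B x - a *\<^sub>C x = B y - a *\<^sub>C y"
  shows "x = y"
proof -
  have d: "x - y \<in> D" using csub_diff[OF D_sub assms(2,3)] .
  have "B (x - y) - a *\<^sub>C (x - y) = (B x - a *\<^sub>C x) - (B y - a *\<^sub>C y)"
    unfolding B_diff[OF assms(2,3)] by (simp add: cscale_diff_right algebra_simps)
  then have "B (x - y) - a *\<^sub>C (x - y) = 0" using assms(4) by simp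
  then have "\<bar>Im a\<bar> * norm (x - y) \<le> 0" using lower[OF d, of a] by simp
  then show ?thesis using assms(1) by (simp add: mult_le_0_iff)
qed

lemma ran_closed:
  assumes a: "Im a \<noteq> 0"
  shows "closed (ranB B D a)"
proof (rule closed_sequential_limits[THEN iffD2], intro allI impI)
  fix f l assume fl: "(\<forall>k. f k \<in> ranB B D a) \<and> f \<longlonglongrightarrow> l"
  then have "\<forall>k. \<exists>x. x \<in> D \<and> f k = B x - a *\<^sub>C x" unfolding ranB_def by blast
  then obtain x where x: "\<And>k. x k \<in> D" "\<And>k. f k = B (x k) - a *\<^sub>C x k" by metis
  have ap: "\<bar>Im a\<bar> > 0" using a by simp
  have "Cauchy f" using fl LIMSEQ_imp_Cauchy by blast
  have "Cauchy x"
  proof (rule CauchyI)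
    fix e :: real assume e: "e > 0"
    obtain M where M: "\<forall>i\<ge>M. \<forall>j\<ge>M. norm (f i - f j) < e * \<bar>Im a\<bar>"
      using CauchyD[OF \<open>Cauchy f\<close>, of "e * \<bar>Im a\<bar>"] e ap by auto
    show "\<exists>M. \<forall>i\<ge>M. \<forall>j\<ge>M. norm (x i - x j) < e"
    proof (intro exI allI impI)
      fix i j assume ij: "M \<le> i" "M \<le> j"
      have "f i - f j = B (x i - x j) - a *\<^sub>C (x i - x j)"
        unfolding x(2) B_diff[OF x(1) x(1)] by (simp add: cscale_diff_right algebra_simps)
      then have "\<bar>Im a\<bar> * norm (x i - x j) \<le> norm (f i - f j)"
        using lower[OF csub_diff[OF D_sub x(1) x(1)], of a] by simp
      also have "\<dots> < e * \<bar>Im a\<bar>" using M ij by simp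
      finally show "norm (x i - x j) < e" using ap by (simp add: mult.commute)
    qed
  qed
  then obtain p where xp: "x \<longlonglongrightarrow> p" using Cauchy_convergent_iff convergent_def by blast
  have Bx: "(\<lambda>k. B (x k)) \<longlonglongrightarrow> l + a *\<^sub>C p"
  proof -
    have "(\<lambda>k. f k + a *\<^sub>C x k) \<longlonglongrightarrow> l + a *\<^sub>C p"
      using fl by (intro tendsto_add tendsto_cscale xp) auto
    moreover have "(\<lambda>k. f k + a *\<^sub>C x k) = (\<lambda>k. B (x k))" using x by simp
    ultimately show ?thesis by simp
  qed
  have lim: "(\<lambda>k. (x k, B (x k))) \<longlonglongrightarrow> (p, l + a *\<^sub>C p)" by (intro tendsto_Pair xp Bx)
  have mem: "\<And>k. (x k, B (x k)) \<in> {(x, B x) | x. x \<in> D}" using x by blast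
  have "(p, l + a *\<^sub>C p) \<in> {(x, B x) | x. x \<in> D}"
    by (rule closed_sequentially[OF B_graph mem lim])
  then have pD: "p \<in> D" and Bp: "B p = l + a *\<^sub>C p" by auto
  have "l = B p - a *\<^sub>C p" using Bp by simp
  then show "l \<in> ranB B D a" unfolding ranB_def using pD by blast
qed

lemma Ran_sub: "csubspace (ranB B D (cnj w))" by (rule ran_sub)
lemma Ran_closed: "closed (ranB B D (cnj w))" by (rule ran_closed) (use wIm in simp)

lemma Q_props: "Qw B D w h \<in> ranB B D (cnj w) \<and> (\<forall>y\<in>ranB B D (cnj w). cinner (h - Qw B D w h) y = 0)"
  unfolding Qw_def by (rule proj_exists[OF Ran_sub Ran_closed])

lemma Q_in: "Qw B D w h \<in> ranB B D (cnj w)" using Q_props by blast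

lemma P_in: "Pw B D w h \<in> defect_space B D w"
  unfolding defect_space_def orth_def Pw_def
proof (intro CollectI ballI)
  fix x assume "x \<in> ranB B D (cnj w)"
  then have "cinner (h - Qw B D w h) x = 0" using Q_props by blast
  then show "cinner x (h - Qw B D w h) = 0" by (subst cinner_commute) simp
qed

lemma N_orth: "x \<in> defect_space B D w \<Longrightarrow> y \<in> ranB B D (cnj w) \<Longrightarrow> cinner x y = 0"
  unfolding defect_space_def orth_def by (subst cinner_commute) simp

lemma Q_N: "x \<in> defect_space B D w \<Longrightarrow> Qw B D w x = 0"
  unfolding Qw_def by (rule cproj_eqI[OF Ran_sub csub_zero[OF Ran_sub]]) (simp add: N_orth)

lemma N_sub: "csubspace (defect_space B D w)"
  unfolding defect_space_def by (rule orth_csubspace)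

lemma N_inner_P: "x \<in> defect_space B D w \<Longrightarrow> cinner x (Pw B D w h) = cinner x h"
  unfolding Pw_def by (simp add: cinner_diff_right N_orth[OF _ Q_in])

lemma pyth_PQ: "(norm h)\<^sup>2 = (norm (Pw B D w h))\<^sup>2 + (norm (Qw B D w h))\<^sup>2"
proof -
  have "cinner (Pw B D w h) (Qw B D w h) = 0" unfolding Pw_def using Q_props by blast
  then have "(norm (Pw B D w h + Qw B D w h))\<^sup>2 = (norm (Pw B D w h))\<^sup>2 + (norm (Qw B D w h))\<^sup>2"
    by (rule pythag)
  then show ?thesis unfolding Pw_def by simp
qed

lemma cnjw: "Im (cnj w) \<noteq> 0" using wIm by simp

lemma bw_ex1: "r \<in> ranB B D (cnj w) \<Longrightarrow> \<exists>!x. x \<in> D \<and> B x - cnj w *\<^sub>C x = r"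
  unfolding ranB_def using uniq[OF cnjw] by blast

lemma bwB_norm:
  assumes r: "r \<in> ranB B D (cnj w)"
  shows "norm (bwB B D w r) = norm r"
proof -
  define x where "x = (THE x. x \<in> D \<and> B x - cnj w *\<^sub>C x = r)"
  have x: "x \<in> D \<and> B x - cnj w *\<^sub>C x = r" unfolding x_def by (rule theI'[OF bw_ex1[OF r]])
  have b: "bwB B D w r = B x - w *\<^sub>C x" unfolding bwB_def x_def by (simp add: Let_def)
  have "(norm (B x - w *\<^sub>C x))\<^sup>2 = (norm (B x - cnj w *\<^sub>C x))\<^sup>2"
    using norm_shift[of x w] norm_shift[of x "cnj w"] x by simp
  then show ?thesis using b x by (simp add: power2_eq_iff_nonneg)
qed

lemma bwB_zero: "bwB B D w 0 = 0"
proof -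
  have "(THE x. x \<in> D \<and> B x - cnj w *\<^sub>C x = 0) = 0"
    by (rule the_equality) (use csub_zero[OF D_sub] B_zero uniq[OF cnjw, of _ 0] in auto)
  then show ?thesis unfolding bwB_def by (simp add: Let_def B_zero)
qed

lemma V_norm: "norm (Vw B D w h) = norm (Qw B D w h)"
  unfolding Vw_def by (rule bwB_norm[OF Q_in])

lemma V_N: "x \<in> defect_space B D w \<Longrightarrow> Vw B D w x = 0"
  unfolding Vw_def by (simp add: Q_N bwB_zero)

lemma V_zero: "Vw B D w 0 = 0"
  by (rule V_N) (rule csub_zero[OF N_sub])

lemma Vpow_zero: "(Vw B D w ^^ m) 0 = 0"
  by (induction m) (simp_all add: V_zero)

lemma Vpow_N: "x \<in> defect_space B D w \<Longrightarrow> m \<ge> 1 \<Longrightarrow> (Vw B D w ^^ m) x = 0"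
proof -
  assume x: "x \<in> defect_space B D w" and m: "m \<ge> 1"
  then obtain k where "m = Suc k" by (cases m) auto
  then show ?thesis by (simp only: funpow_Suc_right comp_def V_N[OF x] Vpow_zero)
qed

lemma P_tele: "(norm (Pw B D w ((Vw B D w ^^ j) h)))\<^sup>2
   = (norm ((Vw B D w ^^ j) h))\<^sup>2 - (norm ((Vw B D w ^^ Suc j) h))\<^sup>2"
  using pyth_PQ[of "(Vw B D w ^^ j) h"] V_norm[of "(Vw B D w ^^ j) h"] by simp

lemma P_sum: "(\<Sum>j<m. (norm (Pw B D w ((Vw B D w ^^ j) h)))\<^sup>2) = (norm h)\<^sup>2 - (norm ((Vw B D w ^^ m) h))\<^sup>2"
  by (induction m) (simp_all add: P_tele)

lemma P_sum_le: "(\<Sum>j<m. (norm (Pw B D w ((Vw B D w ^^ j) h)))\<^sup>2) \<le> (norm h)\<^sup>2"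
  by (simp add: P_sum)

end




locale dil = opB n B D w for n B and D :: "'h::chilbert set" and w +
  fixes J :: "'h \<Rightarrow> 'k::chilbert" and U :: "'k \<Rightarrow> 'k"
  assumes dil: "unitary_dilation J U (Vw B D w)"
begin

lemma J_add: "J (a + b) = J a + J b"
  using dil by (simp add: unitary_dilation_def isometric_embedding_def clinear_on_def)
lemma J_scale: "J (c *\<^sub>C a) = c *\<^sub>C J a"
  using dil by (simp add: unitary_dilation_def isometric_embedding_def clinear_on_def)
lemma J_norm: "norm (J a) = norm a"
  using dil by (simp add: unitary_dilation_def isometric_embedding_def)
lemma J_zero: "J 0 = 0" using J_add[of 0 0] by simp
lemma J_diff: "J (a - b) = J a - J b"
  using J_add[of a "(-1) *\<^sub>C b"] J_scale[of "-1" b] by (simp add: cscale_minus_one)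
lemma J_inner: "cinner (J a) (J b) = cinner a b"
  by (rule cinner_isometry[OF J_add J_scale J_norm])

lemma U_add: "U (a + b) = U a + U b"
  using dil by (simp add: unitary_dilation_def unitary_op_def clinear_on_def)
lemma U_scale: "U (c *\<^sub>C a) = c *\<^sub>C U a"
  using dil by (simp add: unitary_dilation_def unitary_op_def clinear_on_def)
lemma U_norm: "norm (U a) = norm a"
  using dil by (simp add: unitary_dilation_def unitary_op_def)
lemma U_bij: "bij U"
  using dil by (simp add: unitary_dilation_def unitary_op_def)
lemma U_inner: "cinner (U a) (U b) = cinner a b"
  by (rule cinner_isometry[OF U_add U_scale U_norm])
lemma UW: "U (inv U x) = x" using U_bij bij_is_surj surj_f_inv_f by metis
lemma WU: "inv U (U x) = x" using U_bij bij_is_inj inv_f_f by metis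

lemma dil_eq: "J ((Vw B D w ^^ m) x) = cproj (range J) ((U ^^ m) (J x))"
  using dil by (simp add: unitary_dilation_def)

lemma rangeJ_sub: "csubspace (range J)"
proof -
  have "0 \<in> range J" using J_zero by (metis rangeI)
  moreover have "J a + J b \<in> range J" for a b by (simp add: J_add[symmetric])
  moreover have "c *\<^sub>C J a \<in> range J" for a c by (simp add: J_scale[symmetric])
  ultimately show ?thesis unfolding csubspace_def by (auto simp: image_iff)
qed

lemma rangeJ_closed: "closed (range J)"
proof (rule closed_sequential_limits[THEN iffD2], intro allI impI)
  fix f l assume fl: "(\<forall>k. f k \<in> range J) \<and> f \<longlonglongrightarrow> l"
  then have "\<forall>k. \<exists>a. f k = J a" by blast
  then obtain x where x: "\<And>k. f k = J (x k)" by metis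
  have "Cauchy f" using fl LIMSEQ_imp_Cauchy by blast
  have "Cauchy x"
  proof (rule CauchyI)
    fix e :: real assume e: "e > 0"
    obtain M where M: "\<forall>i\<ge>M. \<forall>j\<ge>M. norm (f i - f j) < e"
      using CauchyD[OF \<open>Cauchy f\<close> e] by auto
    show "\<exists>M. \<forall>i\<ge>M. \<forall>j\<ge>M. norm (x i - x j) < e"
    proof (intro exI allI impI)
      fix i j assume "M \<le> i" "M \<le> j"
      then have "norm (f i - f j) < e" using M by blast
      moreover have "norm (f i - f j) = norm (x i - x j)" by (simp add: x J_diff[symmetric] J_norm)
      ultimately show "norm (x i - x j) < e" by simp
    qed
  qed
  then obtain p where xp: "x \<longlonglongrightarrow> p" using Cauchy_convergent_iff convergent_def by blast
  have "(\<lambda>k. J (x k)) \<longlonglongrightarrow> J p"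
  proof -
    have "(\<lambda>k. norm (J (x k) - J p)) = (\<lambda>k. norm (x k - p))" by (simp add: J_diff[symmetric] J_norm)
    moreover have "(\<lambda>k. norm (x k - p)) \<longlonglongrightarrow> 0" using tendsto_norm_zero[OF LIM_zero[OF xp]] .
    ultimately have "(\<lambda>k. norm (J (x k) - J p)) \<longlonglongrightarrow> 0" by simp
    then have "(\<lambda>k. J (x k) - J p) \<longlonglongrightarrow> 0" by (rule tendsto_norm_zero_cancel)
    then show ?thesis by (rule LIM_zero_cancel)
  qed
  moreover have "f = (\<lambda>k. J (x k))" using x by auto
  ultimately have "f \<longlonglongrightarrow> J p" by simp
  then have "l = J p" using fl LIMSEQ_unique by blast
  then show "l \<in> range J" by simp
qed

lemma dilA: "cinner ((U ^^ m) (J x)) (J y) = cinner ((Vw B D w ^^ m) x) y"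
proof -
  have "cinner ((U ^^ m) (J x) - cproj (range J) ((U ^^ m) (J x))) (J y) = 0"
    using proj_exists[OF rangeJ_sub rangeJ_closed] by blast
  then have "cinner ((U ^^ m) (J x)) (J y) = cinner (J ((Vw B D w ^^ m) x)) (J y)"
    by (simp add: cinner_diff_left dil_eq)
  then show ?thesis by (simp add: J_inner)
qed

lemma W_inner: "cinner ((inv U ^^ a) p) q = cinner p ((U ^^ a) q)"
proof (induction a arbitrary: q)
  case 0 then show ?case by simp
next
  case (Suc a)
  have "cinner ((inv U ^^ Suc a) p) q = cinner (inv U ((inv U ^^ a) p)) q" by simp
  also have "\<dots> = cinner (U (inv U ((inv U ^^ a) p))) (U q)" by (simp add: U_inner)
  also have "\<dots> = cinner ((inv U ^^ a) p) (U q)" by (simp add: UW)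
  also have "\<dots> = cinner p ((U ^^ a) (U q))" by (rule Suc)
  also have "\<dots> = cinner p ((U ^^ Suc a) q)" by (simp only: funpow_Suc_right comp_def)
  finally show ?case .
qed

lemma W_inner': "cinner p ((inv U ^^ a) q) = cinner ((U ^^ a) p) q"
  by (subst (1 2) cinner_commute) (simp add: W_inner)

lemma UW_pow: "(U ^^ a) ((inv U ^^ a) q) = q"
proof (induction a arbitrary: q)
  case 0 then show ?case by simp
next
  case (Suc a)
  have "(U ^^ Suc a) ((inv U ^^ Suc a) q) = (U ^^ a) (U (inv U ((inv U ^^ a) q)))"
    by (subst funpow_Suc_right[of a U]) (simp only: comp_def funpow.simps(2))
  then show ?case by (simp add: UW Suc)
qed

lemma WW_inner: "cinner ((inv U ^^ a) p) ((inv U ^^ a) q) = cinner p q"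
  by (simp add: W_inner UW_pow)

lemma cnj_inner_swap: "cnj (cinner a b) = cinner b a" by (simp add: cinner_commute[of b a])

lemma ip_gen:
  assumes x: "x \<in> defect_space B D w" and y: "y \<in> defect_space B D w"
  shows "cinner ((inv U ^^ a) (J x)) ((inv U ^^ b) (J y)) = (if a = b then cinner x y else 0)"
proof (cases "b \<le> a")
  case True
  define d where "d = a - b"
  have a: "a = b + d" unfolding d_def using True by simp
  have "cinner ((inv U ^^ a) (J x)) ((inv U ^^ b) (J y))
      = cinner ((inv U ^^ b) ((inv U ^^ d) (J x))) ((inv U ^^ b) (J y))"
    unfolding a by (simp only: funpow_add comp_def)
  also have "\<dots> = cinner ((inv U ^^ d) (J x)) (J y)" by (rule WW_inner)
  also have "\<dots> = cinner (J x) ((U ^^ d) (J y))" by (rule W_inner)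
  also have "\<dots> = cnj (cinner ((Vw B D w ^^ d) y) x)" by (simp add: cinner_commute[of "J x"] dilA)
  also have "\<dots> = (if a = b then cinner x y else 0)"
  proof (cases "d = 0")
    case True then show ?thesis using a by (simp add: cnj_inner_swap)
  next
    case False then show ?thesis using a Vpow_N[OF y, of d] by simp
  qed
  finally show ?thesis .
next
  case False
  define d where "d = b - a"
  have b: "b = a + d" and d: "d \<ge> 1" unfolding d_def using False by auto
  have "cinner ((inv U ^^ a) (J x)) ((inv U ^^ b) (J y))
      = cinner ((inv U ^^ a) (J x)) ((inv U ^^ a) ((inv U ^^ d) (J y)))"
    unfolding b by (simp only: funpow_add comp_def)
  also have "\<dots> = cinner (J x) ((inv U ^^ d) (J y))" by (rule WW_inner)
  also have "\<dots> = cinner ((U ^^ d) (J x)) (J y)" by (rule W_inner')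
  also have "\<dots> = 0" using dilA Vpow_N[OF x d] by simp
  finally show ?thesis using b d by simp
qed

lemma upow_neg: "upow U (- int j) = inv U ^^ j"
  unfolding upow_def by (cases "j = 0") auto

lemma gen_inner:
  assumes x: "x \<in> defect_space B D w" and y: "y \<in> defect_space B D w"
  shows "cinner (upow U k (J x)) ((inv U ^^ j) (J y)) = (if k + int j = 0 then cinner x y else 0)"
proof (cases "k \<ge> 0")
  case True
  define m where "m = nat k"
  have k: "k = int m" unfolding m_def using True by simp
  have "cinner (upow U k (J x)) ((inv U ^^ j) (J y)) = cinner ((U ^^ m) (J x)) ((inv U ^^ j) (J y))"
    unfolding upow_def m_def using True by simp
  also have "\<dots> = cinner ((U ^^ j) ((U ^^ m) (J x))) (J y)" by (rule W_inner')
  also have "\<dots> = cinner ((U ^^ (j + m)) (J x)) (J y)" by (simp only: funpow_add comp_def)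
  also have "\<dots> = cinner ((Vw B D w ^^ (j + m)) x) y" by (rule dilA)
  also have "\<dots> = (if k + int j = 0 then cinner x y else 0)"
  proof (cases "j + m = 0")
    case True then show ?thesis using k by simp
  next
    case False
    then have "k + int j \<noteq> 0" using k by linarith
    moreover have "(Vw B D w ^^ (j + m)) x = 0" using False by (intro Vpow_N[OF x]) auto
    ultimately show ?thesis by simp
  qed
  finally show ?thesis .
next
  case False
  define a where "a = nat (- k)"
  have k: "k = - int a" unfolding a_def using False by simp
  have "upow U k = inv U ^^ a" unfolding k by (rule upow_neg)
  then show ?thesis using ip_gen[OF x y, of a j] k by auto
qed

lemma gen_h:
  assumes x: "x \<in> defect_space B D w"
  shows "cinner (upow U k (J x)) (J h) =
     (if k \<le> 0 then cinner x (Pw B D w ((Vw B D w ^^ nat (- k)) h)) else 0)"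
proof (cases "k \<ge> 0")
  case True
  define m where "m = nat k"
  have "cinner (upow U k (J x)) (J h) = cinner ((U ^^ m) (J x)) (J h)"
    unfolding upow_def m_def using True by simp
  also have "\<dots> = cinner ((Vw B D w ^^ m) x) h" by (rule dilA)
  also have "\<dots> = (if k \<le> 0 then cinner x (Pw B D w ((Vw B D w ^^ nat (- k)) h)) else 0)"
  proof (cases "k = 0")
    case True then show ?thesis unfolding m_def by (simp add: N_inner_P[OF x])
  next
    case False then show ?thesis using \<open>k \<ge> 0\<close> Vpow_N[OF x, of m] unfolding m_def by simp
  qed
  finally show ?thesis .
next
  case False
  define a where "a = nat (- k)"
  have k: "k = - int a" unfolding a_def using False by simp
  have "upow U k = inv U ^^ a" unfolding k by (rule upow_neg)
  then have "cinner (upow U k (J x)) (J h) = cinner (J x) ((U ^^ a) (J h))" by (simp add: W_inner)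
  also have "\<dots> = cnj (cinner ((Vw B D w ^^ a) h) x)" by (simp add: cinner_commute[of "J x"] dilA)
  also have "\<dots> = cinner x ((Vw B D w ^^ a) h)" by (rule cnj_inner_swap)
  also have "\<dots> = cinner x (Pw B D w ((Vw B D w ^^ a) h))" by (simp add: N_inner_P[OF x])
  finally show ?thesis using False unfolding a_def by simp
qed

end




lemma cspan_mem: "g \<in> S \<Longrightarrow> g \<in> cspan S"
  unfolding cspan_def
  by (rule CollectI, rule exI[of _ "{g}"], rule exI[of _ "\<lambda>_. 1"]) (simp add: cscale_one)

lemma cspan_zero: "0 \<in> cspan S"
  unfolding cspan_def by (rule CollectI, rule exI[of _ "{}"]) simp

lemma sum_restrict_cscale:
  assumes "finite F" "F1 \<subseteq> F"
  shows "(\<Sum>x\<in>F. (if x \<in> F1 then c x else 0) *\<^sub>C x) = (\<Sum>x\<in>F1. c x *\<^sub>C (x::'a::chilbert))"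
proof -
  have "(\<Sum>x\<in>F. (if x \<in> F1 then c x else 0) *\<^sub>C x) = (\<Sum>x\<in>F. if x \<in> F1 then c x *\<^sub>C x else 0)"
    by (rule sum.cong) auto
  also have "\<dots> = (\<Sum>x\<in>F \<inter> F1. c x *\<^sub>C x)" by (simp add: sum.inter_restrict[OF assms(1)])
  also have "F \<inter> F1 = F1" using assms by auto
  finally show ?thesis .
qed

lemma cspan_add:
  assumes "u \<in> cspan S" "v \<in> cspan S"
  shows "u + v \<in> cspan (S::'a::chilbert set)"
proof -
  obtain F1 c1 where 1: "u = (\<Sum>x\<in>F1. c1 x *\<^sub>C x)" "finite F1" "F1 \<subseteq> S"
    using assms(1) unfolding cspan_def by blast
  obtain F2 c2 where 2: "v = (\<Sum>x\<in>F2. c2 x *\<^sub>C x)" "finite F2" "F2 \<subseteq> S"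
    using assms(2) unfolding cspan_def by blast
  define c where "c x = (if x \<in> F1 then c1 x else 0) + (if x \<in> F2 then c2 x else 0)" for x
  have f: "finite (F1 \<union> F2)" using 1 2 by simp
  have "(\<Sum>x\<in>F1 \<union> F2. c x *\<^sub>C x) = (\<Sum>x\<in>F1 \<union> F2. (if x \<in> F1 then c1 x else 0) *\<^sub>C x)
      + (\<Sum>x\<in>F1 \<union> F2. (if x \<in> F2 then c2 x else 0) *\<^sub>C x)"
    unfolding c_def by (simp add: cscale_add_left sum.distrib)
  also have "\<dots> = u + v" using 1 2 f by (simp add: sum_restrict_cscale)
  finally have e: "(\<Sum>x\<in>F1 \<union> F2. c x *\<^sub>C x) = u + v" .
  show ?thesis unfolding cspan_def
    by (rule CollectI, rule exI[of _ "F1 \<union> F2"], rule exI[of _ c]) (use 1 2 f e in auto)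
qed

lemma cspan_orth:
  assumes "\<forall>g\<in>S. cinner g v = 0" "u \<in> cspan S"
  shows "cinner u v = 0"
proof -
  obtain F c where "u = (\<Sum>x\<in>F. c x *\<^sub>C x)" "finite F" "F \<subseteq> S"
    using assms(2) unfolding cspan_def by blast
  then show ?thesis using assms(1) by (auto simp: cinner_sum_left cinner_cscale_left intro!: sum.neutral)
qed

lemma closure_orth:
  assumes "\<forall>a\<in>A. cinner a v = 0" "u \<in> closure A"
  shows "cinner u v = 0"
proof -
  obtain f where f: "\<forall>n. f n \<in> A" "f \<longlonglongrightarrow> u" using assms(2) closure_sequential by blast
  have "(\<lambda>n. cinner (f n) v) \<longlonglongrightarrow> cinner u v" by (rule tendsto_cinner_left[OF f(2)])
  moreover have "(\<lambda>n. cinner (f n) v) = (\<lambda>n. 0)" using f(1) assms(1) by auto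
  ultimately have "(\<lambda>n. 0) \<longlonglongrightarrow> cinner u v" by simp
  then show ?thesis by (simp add: LIMSEQ_const_iff)
qed

context dil begin

lemma T_orth: "cinner ((inv U ^^ i) (J (Pw B D w ((Vw B D w ^^ i) h))))
                      ((inv U ^^ j) (J (Pw B D w ((Vw B D w ^^ j) h))))
   = (if i = j then complex_of_real ((norm (Pw B D w ((Vw B D w ^^ i) h)))\<^sup>2) else 0)"
  using ip_gen[OF P_in[of "(Vw B D w ^^ i) h"] P_in[of "(Vw B D w ^^ j) h"], of i j] by (simp add: cinner_self)

lemma T_norm_sum:
  "(norm (\<Sum>j\<in>{m..<m+k}. (inv U ^^ j) (J (Pw B D w ((Vw B D w ^^ j) h)))))\<^sup>2
   = (\<Sum>j\<in>{m..<m+k}. (norm (Pw B D w ((Vw B D w ^^ j) h)))\<^sup>2)"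
proof (induction k)
  case 0 then show ?case by simp
next
  case (Suc k)
  define T where "T j = (inv U ^^ j) (J (Pw B D w ((Vw B D w ^^ j) h)))" for j
  have o: "cinner (\<Sum>j\<in>{m..<m+k}. T j) (T (m + k)) = 0"
    unfolding cinner_sum_left T_def by (rule sum.neutral) (auto simp: T_orth)
  have "(norm (\<Sum>j\<in>{m..<m + Suc k}. T j))\<^sup>2 = (norm ((\<Sum>j\<in>{m..<m+k}. T j) + T (m + k)))\<^sup>2"
    by simp
  also have "\<dots> = (norm (\<Sum>j\<in>{m..<m+k}. T j))\<^sup>2 + (norm (T (m + k)))\<^sup>2" by (rule pythag[OF o])
  also have "(norm (T (m + k)))\<^sup>2 = (norm (Pw B D w ((Vw B D w ^^ (m + k)) h)))\<^sup>2"
    using T_orth[of "m + k" h "m + k"] unfolding T_def[symmetric] by (simp add: cinner_self del: of_real_power)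
  finally show ?case using Suc unfolding T_def by simp
qed

lemma T_summable: "summable (\<lambda>j. (inv U ^^ j) (J (Pw B D w ((Vw B D w ^^ j) h))))"
proof -
  define y where "y j = (norm (Pw B D w ((Vw B D w ^^ j) h)))\<^sup>2" for j
  have ys: "summable y" unfolding y_def
    by (rule summableI_nonneg_bounded[of _ "(norm h)\<^sup>2"]) (simp_all add: P_sum_le)
  show ?thesis
  proof (subst summable_Cauchy, intro allI impI)
    fix e :: real assume e: "e > 0"
    then obtain N where N: "\<forall>m\<ge>N. \<forall>n. norm (sum y {m..<n}) < e\<^sup>2"
      using ys[unfolded summable_Cauchy] by (meson zero_less_power)
    show "\<exists>N. \<forall>m\<ge>N. \<forall>n. norm (\<Sum>j\<in>{m..<n}. (inv U ^^ j) (J (Pw B D w ((Vw B D w ^^ j) h)))) < e"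
    proof (intro exI allI impI)
      fix m n assume m: "N \<le> m"
      show "norm (\<Sum>j\<in>{m..<n}. (inv U ^^ j) (J (Pw B D w ((Vw B D w ^^ j) h)))) < e"
      proof (cases "n \<le> m")
        case True then show ?thesis using e by simp
      next
        case False
        then obtain k where n: "n = m + k" by (metis le_add_diff_inverse nat_le_linear)
        have "(norm (\<Sum>j\<in>{m..<n}. (inv U ^^ j) (J (Pw B D w ((Vw B D w ^^ j) h)))))\<^sup>2 = sum y {m..<n}"
          unfolding n y_def by (rule T_norm_sum)
        also have "\<dots> < e\<^sup>2" using N m by (metis real_norm_def abs_le_D1 le_less_trans abs_ge_self)
        finally show ?thesis using e by (simp add: power_less_imp_less_base)
      qed
    qed
  qed
qed

end




lemma cinner_sum_right: "cinner y (\<Sum>i\<in>F. f i) = (\<Sum>i\<in>F. cinner y (f i))"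
  by (induction F rule: infinite_finite_induct) (auto simp: cinner_add_right)

context dil begin

lemma main_loc:
  "(\<lambda>j. (inv U ^^ j) (J (Pw B D w ((Vw B D w ^^ j) h))))
     sums (J h - cproj (orth (closure (cspan
             {upow U k (J x) | k x. x \<in> defect_space B D w}))) (J h))"
proof -
  define G where "G = {upow U k (J x) | k x. x \<in> defect_space B D w}"
  define L where "L = closure (cspan G)"
  define T where "T j = (inv U ^^ j) (J (Pw B D w ((Vw B D w ^^ j) h)))" for j
  define Sm where "Sm = suminf T"
  have sums: "T sums Sm" unfolding Sm_def T_def using T_summable by (rule summable_sums)
  then have ps: "(\<lambda>n. \<Sum>j<n. T j) \<longlonglongrightarrow> Sm" by (simp add: sums_def)
  have TG: "T j \<in> G" for j
  proof -
    have "T j = upow U (- int j) (J (Pw B D w ((Vw B D w ^^ j) h)))" unfolding T_def upow_neg ..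
    then show ?thesis unfolding G_def using P_in by blast
  qed
  have psG: "(\<Sum>j<n. T j) \<in> cspan G" for n
  proof (induction n)
    case 0 then show ?case by (simp add: cspan_zero)
  next
    case (Suc n) then show ?case by (simp add: cspan_add cspan_mem TG)
  qed
  have SmL: "Sm \<in> L" unfolding L_def closure_sequential
    by (rule exI[of _ "\<lambda>n. \<Sum>j<n. T j"]) (use psG ps in simp)
  have gen_orth: "cinner g (J h - Sm) = 0" if g: "g \<in> G" for g
  proof -
    obtain k x where gk: "g = upow U k (J x)" and x: "x \<in> defect_space B D w"
      using g unfolding G_def by blast
    define val where "val = (if k \<le> 0 then cinner x (Pw B D w ((Vw B D w ^^ nat (- k)) h)) else 0)"
    have gh: "cinner g (J h) = val" unfolding gk val_def by (rule gen_h[OF x])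
    have ev: "cinner g (\<Sum>j<n. T j) = val" if n: "n > nat (- k)" for n
    proof -
      have "cinner g (\<Sum>j<n. T j) = (\<Sum>j<n. cinner g (T j))" by (rule cinner_sum_right)
      also have "\<dots> = (\<Sum>j<n. if k + int j = 0 then cinner x (Pw B D w ((Vw B D w ^^ j) h)) else 0)"
        unfolding T_def gk by (rule sum.cong) (simp_all add: gen_inner[OF x P_in])
      also have "\<dots> = val"
      proof (cases "k \<le> 0")
        case True
        have "(\<Sum>j<n. if k + int j = 0 then cinner x (Pw B D w ((Vw B D w ^^ j) h)) else 0)
            = (\<Sum>j<n. if j = nat (- k) then cinner x (Pw B D w ((Vw B D w ^^ j) h)) else 0)"
          by (rule sum.cong) (use True in auto)
        also have "\<dots> = val" using n True unfolding val_def by simp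
        finally show ?thesis .
      next
        case False
        have "(\<Sum>j<n. if k + int j = 0 then cinner x (Pw B D w ((Vw B D w ^^ j) h)) else 0) = 0"
          by (rule sum.neutral) (use False in auto)
        then show ?thesis using False unfolding val_def by simp
      qed
      finally show ?thesis .
    qed
    have "(\<lambda>n. cinner g (\<Sum>j<n. T j)) \<longlonglongrightarrow> cinner g Sm" by (rule tendsto_cinner_right[OF ps])
    moreover have "(\<lambda>n. cinner g (\<Sum>j<n. T j)) \<longlonglongrightarrow> val"
      by (rule tendsto_eventually, rule eventually_sequentiallyI[of "Suc (nat (- k))"]) (simp add: ev)
    ultimately have "cinner g Sm = val" by (rule LIMSEQ_unique)
    then show ?thesis using gh by (simp add: cinner_diff_right)
  qed
  have inorth: "J h - Sm \<in> orth L"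
    unfolding orth_def L_def
  proof (intro CollectI ballI)
    fix u assume "u \<in> closure (cspan G)"
    moreover have "\<forall>a\<in>cspan G. cinner a (J h - Sm) = 0"
      using cspan_orth[of G "J h - Sm"] gen_orth by blast
    ultimately show "cinner u (J h - Sm) = 0" using closure_orth by blast
  qed
  have "cproj (orth L) (J h) = J h - Sm"
  proof (rule cproj_eqI[OF orth_csubspace inorth], intro ballI)
    fix y assume "y \<in> orth L"
    then show "cinner (J h - (J h - Sm)) y = 0" using SmL unfolding orth_def by simp
  qed
  then have "J h - cproj (orth L) (J h) = Sm" by simp
  then show ?thesis using sums unfolding L_def G_def T_def by simp
qed

end


theorem mainTheorem8:
  fixes n :: nat and B :: "'h::chilbert \<Rightarrow> 'h" and D :: "'h set" and w :: complex
    and J :: "'h \<Rightarrow> 'k::chilbert" and U :: "'k \<Rightarrow> 'k" and h :: 'h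
  assumes "separable_space TYPE('h)"
    and "n \<ge> 1"
    and "in_Sn n B D"
    and "Im w \<noteq> 0"
    and "minimal_unitary_dilation J U (Vw B D w)"
  shows "(\<lambda>j. upow U (- int j) (J (Pw B D w ((Vw B D w ^^ j) h))))
           sums (J h - cproj (orth (closure (cspan
                   {upow U k (J x) | k x. x \<in> defect_space B D w}))) (J h))"
proof -
  interpret dil n B D w J U
    using assms(3,4,5) by unfold_locales (simp_all add: minimal_unitary_dilation_def)
  show ?thesis unfolding upow_neg by (rule main_loc)
qed

end
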